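(* Let $d\ge3$. Every $d$-dimensional empirical copula is universally simplified.
   Context: $\mathbb{I}=[0,1]$, $\lambda$ Lebesgue measure. A $d$-dimensional empirical copula is the copula obtained by $d$-linear interpolation of the empirical subcopula of a sample $\mathbf{X}_1,\dots,\mathbf{X}_n$ (without ties) of a $d$-dimensional random vector with continuous marginals; equivalently, there are permutations $\sigma_1,\dots,\sigma_{d-1}$ of $\{1,\dots,n\}$ such that its density is $\hat c_n(\mathbf{u})=n^{d-1}\sum_{i=1}^n\prod_{j=1}^d\mathbf{1}_{I_i^j}(u_j)$ with $I_i^j=((\sigma_j(i)-1)/n,\sigma_j(i)/n]$ for $j\le d-1$ and $I_i^d=((i-1)/n,i/n]$. For a $d$-dimensional copula $C$ and $J\subseteq\{1,\dots,d\}$, $C_J$ denotes the marginal copula of the coordinates in $J$ and $\mu_{C_J}$ its measure. For $J$ with $2\le|J|\le d$ and $L\subseteq J$ with $1\le|L|\le|J|-2$, let $K_{C_J}(\mathbf{t},\cdot)$ be (a version of) the regular conditional distribution of the coordinates in $J\setminus L$ given the coordinates in $L$ equal $\mathbf{t}$ (under $C_J$), so $C_J(\mathbf{u})=\int_{[\mathbf{0},\mathbf{u}_L]}K_{C_J}(\mathbf{t},[\mathbf{0},\mathbf{u}_{J\setminus L}])\,d\mu_{C_L}(\mathbf{t})$, and let $F_{j|L}(\cdot|\mathbf{t})$, $j\in J\setminus L$, be its univariate marginal distribution functions. $C$ is universally simplified if for all such $J,L$ (writing $J\setminus L=\{j_1<\dots<j_m\}$): (U1) there is an $m$-dimensional copula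 $A$ with $C_J(\mathbf{u})=\int_{[\mathbf{0},\mathbf{u}_L]}A(F_{j_1|L}(u_{j_1}|\mathbf{t}),\dots,F_{j_m|L}(u_{j_m}|\mathbf{t}))\,d\mu_{C_L}(\mathbf{t})$ for all $\mathbf{u}\in\mathbb{I}^{|J|}$; and (U2) $F_{j|L}(\cdot|\mathbf{t})$ is continuous for $\mu_{C_L}$-a.e. $\mathbf{t}$, for every $j\in J\setminus L$. *)

theory Defs
  imports "HOL-Probability.Probability" "HOL-Combinatorics.Permutations"
begin

text \<open>Points of the cube over an index set J (subset of the coordinates 1..d) are
  functions nat => real, extensional on J; the product Borel space over J is
  PiM J (\<lambda>_. lborel).\<close>

abbreviation cube_space :: "nat set \<Rightarrow> (nat \<Rightarrow> real) measure" where
  "cube_space J \<equiv> PiM J (\<lambda>_. lborel)"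

definition is_copula :: "nat set \<Rightarrow> ((nat \<Rightarrow> real) \<Rightarrow> real) \<Rightarrow> bool" where
  "is_copula M A \<longleftrightarrow>
     (\<exists>P. prob_space P \<and> sets P = sets (cube_space M) \<and>
        (\<forall>j\<in>M. \<forall>s\<in>{0..1}. measure P {x \<in> space P. x j \<le> s} = s) \<and>
        (\<forall>u. (\<forall>j\<in>M. u j \<in> {0..1}) \<longrightarrow>
               A u = measure P {x \<in> space P. \<forall>j\<in>M. x j \<le> u j}))"

text \<open>Interval I_i^j of the empirical copula (coordinates indexed 1..d, sample index i in 1..n);
  sigma d is taken to be the identity.\<close>
definition emp_interval :: "nat \<Rightarrow> nat \<Rightarrow> (nat \<Rightarrow> nat \<Rightarrow> nat) \<Rightarrow> nat \<Rightarrow> nat \<Rightarrow> real set" where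
  "emp_interval d n \<sigma> i j =
     (let k = (if j = d then i else \<sigma> j i) in {(real k - 1) / real n <.. real k / real n})"

definition emp_density :: "nat \<Rightarrow> nat \<Rightarrow> (nat \<Rightarrow> nat \<Rightarrow> nat) \<Rightarrow> (nat \<Rightarrow> real) \<Rightarrow> real" where
  "emp_density d n \<sigma> u =
     real n ^ (d - 1) * (\<Sum>i\<in>{1..n}. \<Prod>j\<in>{1..d}. indicator (emp_interval d n \<sigma> i j) (u j))"

definition emp_copula_measure :: "nat \<Rightarrow> nat \<Rightarrow> (nat \<Rightarrow> nat \<Rightarrow> nat) \<Rightarrow> (nat \<Rightarrow> real) measure" where
  "emp_copula_measure d n \<sigma> =
     density (cube_space {1..d}) (\<lambda>u. ennreal (emp_density d n \<sigma> u))"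

definition marg :: "(nat \<Rightarrow> real) measure \<Rightarrow> nat set \<Rightarrow> (nat \<Rightarrow> real) measure" where
  "marg \<mu> J = distr \<mu> (cube_space J) (\<lambda>x. restrict x J)"

definition marg_copula :: "(nat \<Rightarrow> real) measure \<Rightarrow> nat set \<Rightarrow> (nat \<Rightarrow> real) \<Rightarrow> real" where
  "marg_copula \<mu> J u = measure (marg \<mu> J) {x \<in> space (cube_space J). \<forall>j\<in>J. x j \<le> u j}"

definition is_rcd ::
  "(nat \<Rightarrow> real) measure \<Rightarrow> nat set \<Rightarrow> nat set \<Rightarrow> ((nat \<Rightarrow> real) \<Rightarrow> (nat \<Rightarrow> real) measure) \<Rightarrow> bool" where
  "is_rcd \<mu> J L K \<longleftrightarrow>
     K \<in> measurable (cube_space L) (subprob_algebra (cube_space (J - L))) \<and>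
     (\<forall>t\<in>space (cube_space L). prob_space (K t)) \<and>
     (\<forall>A\<in>sets (cube_space L). \<forall>B\<in>sets (cube_space (J - L)).
        measure (marg \<mu> J) {x \<in> space (cube_space J). restrict x L \<in> A \<and> restrict x (J - L) \<in> B}
        = (\<integral>t. indicator A t * measure (K t) B \<partial>(marg \<mu> L)))"

definition cond_df :: "((nat \<Rightarrow> real) \<Rightarrow> (nat \<Rightarrow> real) measure) \<Rightarrow> nat \<Rightarrow> real \<Rightarrow> (nat \<Rightarrow> real) \<Rightarrow> real" where
  "cond_df K j s t = measure (K t) {y \<in> space (K t). y j \<le> s}"

definition universally_simplified :: "nat \<Rightarrow> (nat \<Rightarrow> real) measure \<Rightarrow> bool" where
  "universally_simplified d \<mu> \<longleftrightarrow>
    (\<forall>J L. J \<subseteq> {1..d} \<and> 2 \<le> card J \<and> L \<subseteq> J \<and> 1 \<le> card L \<and> card L + 2 \<le> card J \<longrightarrow>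
       (\<exists>K. is_rcd \<mu> J L K) \<and>
       (\<forall>K. is_rcd \<mu> J L K \<longrightarrow>
          \<comment> \<open>(U1)\<close>
          (\<exists>A. is_copula (J - L) A \<and>
             (\<forall>u. (\<forall>j\<in>J. u j \<in> {0..1}) \<longrightarrow>
                marg_copula \<mu> J u =
                (\<integral>t. indicator {t \<in> space (cube_space L). \<forall>j\<in>L. 0 \<le> t j \<and> t j \<le> u j} t
                      * A (\<lambda>j\<in>J - L. cond_df K j (u j) t) \<partial>(marg \<mu> L)))) \<and>
          \<comment> \<open>(U2)\<close>
          (AE t in marg \<mu> L. \<forall>j\<in>J - L. continuous_on UNIV (\<lambda>s. cond_df K j s t))))"

end

theory Submission
  imports Defs
begin

locale emp =
  fixes d n :: nat and \<sigma> :: "nat \<Rightarrow> nat \<Rightarrow> nat"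
  assumes d3: "d \<ge> 3" and n1: "n \<ge> 1" and perm: "\<forall>j\<in>{1..d-1}. \<sigma> j permutes {1..n}"
begin

definition kk where "kk j i = (if j = d then i else \<sigma> j i)"
definition Iv where "Iv i j = {(real (kk j i) - 1) / real n <.. real (kk j i) / real n}"
definition gg where "gg i j x = ennreal (real n * indicator (Iv i j) x)"
definition M where "M i j = density lborel (gg i j)"
definition Q where "Q i S = PiM S (M i)"

lemma Iv_emp: "emp_interval d n \<sigma> i j = Iv i j"
  by (simp add: emp_interval_def Iv_def kk_def Let_def)

lemma npos: "real n > 0" using n1 by simp

lemma emeasure_Iv: "emeasure lborel (Iv i j) = ennreal (1 / real n)"
proof -
  have "(real (kk j i) - 1) / real n \<le> real (kk j i) / real n"
    using npos by (simp add: divide_right_mono)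
  then show ?thesis unfolding Iv_def
    by (simp add: diff_divide_distrib[symmetric])
qed

lemma gg_meas[measurable]: "gg i j \<in> borel_measurable borel"
  unfolding gg_def Iv_def by measurable

lemma sets_M[simp, measurable_cong]: "sets (M i j) = sets borel"
  by (simp add: M_def)

lemma space_M[simp]: "space (M i j) = UNIV"
  by (simp add: M_def)

lemma emeasure_M: assumes "A \<in> sets borel"
  shows "emeasure (M i j) A = ennreal (real n) * emeasure lborel (Iv i j \<inter> A)"
proof -
  have "emeasure (M i j) A = (\<integral>\<^sup>+ x. gg i j x * indicator A x \<partial>lborel)"
    unfolding M_def using assms by (simp add: emeasure_density)
  also have "\<dots> = (\<integral>\<^sup>+ x. ennreal (real n) * indicator (Iv i j \<inter> A) x \<partial>lborel)"
    by (intro nn_integral_cong) (auto simp: gg_def indicator_def)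
  also have "\<dots> = ennreal (real n) * emeasure lborel (Iv i j \<inter> A)"
    using assms by (subst nn_integral_cmult_indicator) (auto simp: Iv_def)
  finally show ?thesis .
qed

lemma prob_M: "prob_space (M i j)"
proof
  have "emeasure (M i j) (space (M i j)) = ennreal (real n) * ennreal (1 / real n)"
    by (simp add: emeasure_M emeasure_Iv)
  also have "\<dots> = 1" using npos by (simp add: ennreal_mult[symmetric])
  finally show "emeasure (M i j) (space (M i j)) = 1" .
qed

lemma pps: "product_prob_space (M i)"
  by (simp add: product_prob_spaceI prob_M)

end


lemma psf_lborel: "product_sigma_finite (\<lambda>_::nat. lborel :: real measure)"
  by unfold_locales

context emp begin

lemma sets_Q[measurable_cong]: "sets (Q i S) = sets (cube_space S)"
  unfolding Q_def by (rule sets_PiM_cong) auto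

lemma space_Q[simp]: "space (Q i S) = space (cube_space S)"
  unfolding Q_def by (simp add: space_PiM)

lemma prob_Q: "prob_space (Q i S)"
  unfolding Q_def by (rule prob_space_PiM) (rule prob_M)

lemma indicator_PiE_prod:
  assumes "finite I" "x \<in> extensional I"
  shows "indicator (PiE I A) x = (\<Prod>j\<in>I. indicator (A j) (x j) :: ennreal)"
proof (cases "\<forall>j\<in>I. x j \<in> A j")
  case True then show ?thesis using assms by (auto simp: indicator_def PiE_iff)
next
  case False then obtain j where "j \<in> I" "x j \<notin> A j" by auto
  then show ?thesis using assms by (auto simp: indicator_def PiE_iff prod_zero_iff)
qed

lemma PiM_M: assumes fin: "finite I"
  shows "Q i I = density (PiM I (\<lambda>_. lborel)) (\<lambda>x. \<Prod>j\<in>I. gg i j (x j))"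
proof -
  interpret P: product_sigma_finite "M i" using pps[of i] by (simp add: product_prob_space_def)
  have "density (PiM I (\<lambda>_. lborel)) (\<lambda>x. \<Prod>j\<in>I. gg i j (x j)) = PiM I (M i)"
  proof (rule P.PiM_eqI)
    show "finite I" by fact
    show "sets (density (PiM I (\<lambda>_. lborel)) (\<lambda>x. \<Prod>j\<in>I. gg i j (x j))) = sets (PiM I (M i))"
      by (simp, rule sets_PiM_cong) auto
  next
    fix A assume A: "\<And>j. j \<in> I \<Longrightarrow> A j \<in> sets (M i j)"
    interpret L: product_sigma_finite "\<lambda>_::nat. lborel :: real measure" by (rule psf_lborel)
    have AI: "PiE I A \<in> sets (PiM I (\<lambda>_. lborel))"
      using A by (intro sets_PiM_I_finite fin) auto
    have "emeasure (density (PiM I (\<lambda>_. lborel)) (\<lambda>x. \<Prod>j\<in>I. gg i j (x j))) (PiE I A)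
       = (\<integral>\<^sup>+ x. (\<Prod>j\<in>I. gg i j (x j)) * indicator (PiE I A) x \<partial>PiM I (\<lambda>_. lborel))"
      using AI by (subst emeasure_density) (auto intro!: nn_integral_cong)
    also have "\<dots> = (\<integral>\<^sup>+ x. (\<Prod>j\<in>I. gg i j (x j) * indicator (A j) (x j)) \<partial>PiM I (\<lambda>_. lborel))"
      apply (intro nn_integral_cong)
      apply (subst indicator_PiE_prod[OF fin])
       apply (auto simp: PiE_iff space_PiM prod.distrib)
      done
    also have "\<dots> = (\<Prod>j\<in>I. \<integral>\<^sup>+ y. gg i j y * indicator (A j) y \<partial>lborel)"
      using A by (intro L.product_nn_integral_prod fin) auto
    also have "\<dots> = (\<Prod>j\<in>I. emeasure (M i j) (A j))"
      using A by (intro prod.cong refl) (simp add: M_def emeasure_density)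
    finally show "emeasure (density (PiM I (\<lambda>_. lborel)) (\<lambda>x. \<Prod>j\<in>I. gg i j (x j))) (PiE I A)
       = (\<Prod>j\<in>I. emeasure (M i j) (A j))" .
  qed
  then show ?thesis by (simp add: Q_def)
qed

lemma dens_eq:
  "ennreal (emp_density d n \<sigma> x) = (\<Sum>i\<in>{1..n}. ennreal (1 / real n) * (\<Prod>j\<in>{1..d}. gg i j (x j)))"
proof -
  have d1: "d = Suc (d - 1)" using d3 by simp
  have "(\<Sum>i\<in>{1..n}. ennreal (1 / real n) * (\<Prod>j\<in>{1..d}. gg i j (x j)))
      = (\<Sum>i\<in>{1..n}. ennreal (1 / real n * (\<Prod>j\<in>{1..d}. real n * indicator (Iv i j) (x j))))"
  proof (intro sum.cong refl)
    fix i
    have "(\<Prod>j\<in>{1..d}. gg i j (x j)) = ennreal (\<Prod>j\<in>{1..d}. real n * indicator (Iv i j) (x j))"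
      unfolding gg_def by (rule prod_ennreal) auto
    moreover have "ennreal (1 / real n) * ennreal (\<Prod>j\<in>{1..d}. real n * indicator (Iv i j) (x j))
       = ennreal (1 / real n * (\<Prod>j\<in>{1..d}. real n * indicator (Iv i j) (x j)))"
      by (rule ennreal_mult[symmetric]) (auto intro!: prod_nonneg)
    ultimately show "ennreal (1 / real n) * (\<Prod>j\<in>{1..d}. gg i j (x j)) = ennreal (1 / real n * (\<Prod>j\<in>{1..d}. real n * indicator (Iv i j) (x j)))"
      by (simp only:)
  qed
  also have "\<dots> = ennreal (\<Sum>i\<in>{1..n}. 1 / real n * (\<Prod>j\<in>{1..d}. real n * indicator (Iv i j) (x j)))"
    by (rule sum_ennreal) (auto intro!: divide_nonneg_nonneg prod_nonneg)
  also have "(\<Sum>i\<in>{1..n}. 1 / real n * (\<Prod>j\<in>{1..d}. real n * indicator (Iv i j) (x j)))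
      = emp_density d n \<sigma> x"
  proof -
    have "1 / real n * (\<Prod>j\<in>{1..d}. real n * indicator (Iv i j) (x j))
        = real n ^ (d - 1) * (\<Prod>j\<in>{1..d}. indicator (Iv i j) (x j))" for i
    proof -
      have "(\<Prod>j\<in>{1..d}. real n * indicator (Iv i j) (x j)) = real n ^ d * (\<Prod>j\<in>{1..d}. indicator (Iv i j) (x j))"
        by (simp add: prod.distrib)
      also have "real n ^ d = real n * real n ^ (d - 1)" by (subst d1) simp
      finally show ?thesis using npos by simp
    qed
    then show ?thesis unfolding emp_density_def Iv_emp by (simp add: sum_distrib_left)
  qed
  finally show ?thesis by simp
qed

lemma emp_meas[measurable]: "(\<lambda>x. \<Prod>j\<in>{1..d}. gg i j (x j)) \<in> borel_measurable (cube_space {1..d})"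
  by measurable

lemma mix: assumes f[measurable]: "f \<in> borel_measurable (cube_space {1..d})"
  shows "(\<integral>\<^sup>+ x. f x \<partial>emp_copula_measure d n \<sigma>) = (\<Sum>i\<in>{1..n}. ennreal (1 / real n) * (\<integral>\<^sup>+ x. f x \<partial>Q i {1..d}))"
proof -
  have "(\<integral>\<^sup>+ x. f x \<partial>emp_copula_measure d n \<sigma>)
     = (\<integral>\<^sup>+ x. ennreal (emp_density d n \<sigma> x) * f x \<partial>cube_space {1..d})"
    unfolding emp_copula_measure_def
    by (subst nn_integral_density) (use f in \<open>auto simp: emp_density_def emp_interval_def Let_def\<close>)
  also have "\<dots> = (\<integral>\<^sup>+ x. (\<Sum>i\<in>{1..n}. ennreal (1 / real n) * ((\<Prod>j\<in>{1..d}. gg i j (x j)) * f x)) \<partial>cube_space {1..d})"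
    by (simp add: dens_eq sum_distrib_right mult.assoc)
  also have "\<dots> = (\<Sum>i\<in>{1..n}. ennreal (1 / real n) * (\<integral>\<^sup>+ x. (\<Prod>j\<in>{1..d}. gg i j (x j)) * f x \<partial>cube_space {1..d}))"
  proof -
    have meas: "\<And>i. (\<lambda>x. ennreal (1 / real n) * ((\<Prod>j\<in>{1..d}. gg i j (x j)) * f x)) \<in> borel_measurable (cube_space {1..d})"
      by measurable
    show ?thesis
      apply (subst nn_integral_sum)
       apply (rule meas)
      apply (intro sum.cong refl)
      apply (rule nn_integral_cmult)
      apply measurable
      done
  qed
  also have "\<dots> = (\<Sum>i\<in>{1..n}. ennreal (1 / real n) * (\<integral>\<^sup>+ x. f x \<partial>Q i {1..d}))"
    apply (intro sum.cong refl arg_cong[where f="(*) (ennreal (1/real n))"])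
    apply (subst PiM_M, simp)
    apply (subst nn_integral_density)
    apply measurable
    done
  finally show ?thesis .
qed

end


context emp begin

lemma margN: assumes J: "J \<subseteq> {1..d}" and g[measurable]: "g \<in> borel_measurable (cube_space J)"
  shows "(\<integral>\<^sup>+ x. g x \<partial>marg (emp_copula_measure d n \<sigma>) J) = (\<Sum>i\<in>{1..n}. ennreal (1 / real n) * (\<integral>\<^sup>+ x. g x \<partial>Q i J))"
proof -
  have r[measurable]: "(\<lambda>x. restrict x J) \<in> measurable (cube_space {1..d}) (cube_space J)"
    using J by (rule measurable_restrict_subset)
  have sm: "sets (emp_copula_measure d n \<sigma>) = sets (cube_space {1..d})"
    by (simp add: emp_copula_measure_def)
  have "(\<integral>\<^sup>+ x. g x \<partial>marg (emp_copula_measure d n \<sigma>) J) = (\<integral>\<^sup>+ x. g (restrict x J) \<partial>emp_copula_measure d n \<sigma>)"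
    unfolding marg_def
    apply (rule nn_integral_distr)
     apply (subst measurable_cong_sets[OF sm refl])
     apply (rule r)
    apply simp
    done
  also have "\<dots> = (\<Sum>i\<in>{1..n}. ennreal (1 / real n) * (\<integral>\<^sup>+ x. g (restrict x J) \<partial>Q i {1..d}))"
    by (rule mix) measurable
  also have "\<dots> = (\<Sum>i\<in>{1..n}. ennreal (1 / real n) * (\<integral>\<^sup>+ x. g x \<partial>Q i J))"
  proof (intro sum.cong refl arg_cong[where f="(*) (ennreal (1/real n))"])
    fix i
    have "Q i J = distr (Q i {1..d}) (Q i J) (\<lambda>f. restrict f J)"
      unfolding Q_def using J by (intro product_prob_space.distr_restrict pps) auto
    then have "(\<integral>\<^sup>+ x. g x \<partial>Q i J) = (\<integral>\<^sup>+ x. g x \<partial>distr (Q i {1..d}) (Q i J) (\<lambda>f. restrict f J))"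
      by simp
    also have "\<dots> = (\<integral>\<^sup>+ x. g (restrict x J) \<partial>Q i {1..d})"
      by (rule nn_integral_distr) (use J in \<open>auto simp: measurable_cong_sets[OF sets_Q sets_Q] intro!: measurable_restrict_subset\<close>)
    finally show "(\<integral>\<^sup>+ x. g (restrict x J) \<partial>Q i {1..d}) = (\<integral>\<^sup>+ x. g x \<partial>Q i J)" by simp
  qed
  finally show ?thesis .
qed

lemma sets_marg[measurable_cong]: "sets (marg (emp_copula_measure d n \<sigma>) J) = sets (cube_space J)"
  by (simp add: marg_def)

lemma space_marg[simp]: "space (marg (emp_copula_measure d n \<sigma>) J) = space (cube_space J)"
  by (simp add: marg_def)

lemma margE: assumes J: "J \<subseteq> {1..d}" and X: "X \<in> sets (cube_space J)"
  shows "emeasure (marg (emp_copula_measure d n \<sigma>) J) X = (\<Sum>i\<in>{1..n}. ennreal (1 / real n) * emeasure (Q i J) X)"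
proof -
  have "emeasure (marg (emp_copula_measure d n \<sigma>) J) X = (\<integral>\<^sup>+ x. indicator X x \<partial>marg (emp_copula_measure d n \<sigma>) J)"
    using X by (simp add: sets_marg)
  also have "\<dots> = (\<Sum>i\<in>{1..n}. ennreal (1 / real n) * (\<integral>\<^sup>+ x. indicator X x \<partial>Q i J))"
    using X by (intro margN J) auto
  also have "\<dots> = (\<Sum>i\<in>{1..n}. ennreal (1 / real n) * emeasure (Q i J) X)"
    using X by (simp add: sets_Q)
  finally show ?thesis .
qed

lemma prob_marg: assumes J: "J \<subseteq> {1..d}" shows "prob_space (marg (emp_copula_measure d n \<sigma>) J)"
proof
  have "emeasure (marg (emp_copula_measure d n \<sigma>) J) (space (marg (emp_copula_measure d n \<sigma>) J))
      = (\<Sum>i\<in>{1..n}. ennreal (1 / real n) * 1)"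
    using margE[OF J, of "space (cube_space J)"]
    by (simp add: prob_space.emeasure_space_1[OF prob_Q, simplified])
  also have "\<dots> = 1" using npos by (simp add: ennreal_of_nat_eq_real_of_nat ennreal_mult[symmetric])
  finally show "emeasure (marg (emp_copula_measure d n \<sigma>) J) (space (marg (emp_copula_measure d n \<sigma>) J)) = 1" .
qed

lemma kk_range: assumes "j \<in> {1..d}" "i \<in> {1..n}" shows "kk j i \<in> {1..n}"
proof (cases "j = d")
  case True then show ?thesis using assms by (simp add: kk_def)
next
  case False then have "\<sigma> j permutes {1..n}" using perm assms by auto
  then show ?thesis using assms False permutes_in_image[of "\<sigma> j" "{1..n}" i] by (simp add: kk_def)
qed

lemma kk_inj: assumes "j \<in> {1..d}" "i \<in> {1..n}" "i' \<in> {1..n}" "kk j i = kk j i'" shows "i = i'"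
proof (cases "j = d")
  case True then show ?thesis using assms by (simp add: kk_def)
next
  case False then have "\<sigma> j permutes {1..n}" using perm assms by auto
  then show ?thesis using assms False by (auto simp: kk_def dest: permutes_inj injD)
qed

lemma Iv_disj: assumes "x \<in> Iv i j" "x \<in> Iv i' j" shows "kk j i = kk j i'"
proof -
  let ?k = "real (kk j i)" and ?k' = "real (kk j i')"
  have "?k - 1 < x * n" "x * n \<le> ?k" "?k' - 1 < x * n" "x * n \<le> ?k'"
    using assms npos by (auto simp: Iv_def field_simps)
  then have "?k < ?k' + 1" "?k' < ?k + 1" by linarith+
  then show ?thesis by linarith
qed

definition idx where "idx l0 t = (LEAST i. i \<in> {1..n} \<and> t l0 \<in> Iv i l0)"

lemma idx_eq: assumes "i \<in> {1..n}" "l0 \<in> {1..d}" "t l0 \<in> Iv i l0" shows "idx l0 t = i"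
  unfolding idx_def
proof (rule Least_equality)
  show "i \<in> {1..n} \<and> t l0 \<in> Iv i l0" using assms by simp
  fix y assume "y \<in> {1..n} \<and> t l0 \<in> Iv y l0"
  then have "y = i" using assms Iv_disj kk_inj by metis
  then show "i \<le> y" by simp
qed

lemma AE_Iv: "AE x in M i j. x \<in> Iv i j"
  unfolding M_def by (subst AE_density) (auto simp: gg_def indicator_def)

lemma AE_idx: assumes "l0 \<in> L" "L \<subseteq> {1..d}" "i \<in> {1..n}"
  shows "AE t in Q i L. idx l0 t = i"
proof -
  have "AE t in Q i L. t l0 \<in> Iv i l0"
    unfolding Q_def using assms by (intro AE_PiM_component prob_M AE_Iv)
  then show ?thesis
    by eventually_elim (use assms in \<open>auto intro!: idx_eq\<close>)
qed

lemma idx_meas[measurable]: assumes "l0 \<in> L"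
  shows "idx l0 \<in> measurable (cube_space L) (count_space UNIV)"
  unfolding idx_def Iv_def using assms by measurable

lemma Q_meas: "(\<lambda>i. Q i S) \<in> measurable (count_space UNIV) (subprob_algebra (cube_space S))"
  by (auto simp: space_subprob_algebra sets_Q prob_Q prob_space_imp_subprob_space)

lemma K0_meas: assumes "l0 \<in> L"
  shows "(\<lambda>t. Q (idx l0 t) S) \<in> measurable (cube_space L) (subprob_algebra (cube_space S))"
  using measurable_compose[OF idx_meas[OF assms] Q_meas] by simp

end


lemma ae_unique:
  fixes f g :: "'a \<Rightarrow> real"
  assumes fm: "finite_measure N"
    and f[measurable]: "f \<in> borel_measurable N" and g[measurable]: "g \<in> borel_measurable N"
    and c0: "0 \<le> c" and bf: "AE x in N. norm (f x) \<le> c" and bg: "AE x in N. norm (g x) \<le> c"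
    and eq: "\<And>A. A \<in> sets N \<Longrightarrow> (\<integral>x. indicator A x * f x \<partial>N) = (\<integral>x. indicator A x * g x \<partial>N)"
  shows "AE x in N. f x = g x"
proof -
  interpret finite_measure N by fact
  have intf: "integrable N (\<lambda>x. indicator A x * f x)" if "A \<in> sets N" for A
  proof (rule integrable_const_bound[where B=c])
    show "AE x in N. norm (indicator A x * f x) \<le> c" using bf by eventually_elim (use c0 in \<open>simp add: indicator_def\<close>)
    show "(\<lambda>x. indicator A x * f x) \<in> borel_measurable N" using that by measurable
  qed
  have intg: "integrable N (\<lambda>x. indicator A x * g x)" if "A \<in> sets N" for A
  proof (rule integrable_const_bound[where B=c])
    show "AE x in N. norm (indicator A x * g x) \<le> c" using bg by eventually_elim (use c0 in \<open>simp add: indicator_def\<close>)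
    show "(\<lambda>x. indicator A x * g x) \<in> borel_measurable N" using that by measurable
  qed
  have one: "AE x in N. \<not> (h1 x < h2 x)"
    if h1[measurable]: "h1 \<in> borel_measurable N" and h2[measurable]: "h2 \<in> borel_measurable N"
      and i1: "\<And>A. A \<in> sets N \<Longrightarrow> integrable N (\<lambda>x. indicator A x * h1 x)"
      and i2: "\<And>A. A \<in> sets N \<Longrightarrow> integrable N (\<lambda>x. indicator A x * h2 x)"
      and e: "\<And>A. A \<in> sets N \<Longrightarrow> (\<integral>x. indicator A x * h1 x \<partial>N) = (\<integral>x. indicator A x * h2 x \<partial>N)"
    for h1 h2 :: "'a \<Rightarrow> real"
  proof -
    define A where "A = {x\<in>space N. h1 x < h2 x}"
    have A[measurable]: "A \<in> sets N" unfolding A_def by measurable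
    have ih: "integrable N (\<lambda>x. indicator A x * h2 x - indicator A x * h1 x)"
      using i1[OF A] i2[OF A] by auto
    have "(\<integral>x. indicator A x * h2 x - indicator A x * h1 x \<partial>N) = 0"
      using i1[OF A] i2[OF A] e[OF A] by simp
    moreover have "AE x in N. 0 \<le> indicator A x * h2 x - indicator A x * h1 x"
      by (intro AE_I2) (auto simp: A_def indicator_def)
    ultimately have "AE x in N. indicator A x * h2 x - indicator A x * h1 x = 0"
      using integral_nonneg_eq_0_iff_AE[OF ih] by simp
    from this AE_space[of N] show ?thesis
      by eventually_elim (auto simp: A_def indicator_def split: if_splits)
  qed
  have "AE x in N. \<not> (f x < g x)" by (rule one[OF f g intf intg eq])
  moreover have "AE x in N. \<not> (g x < f x)" by (rule one[OF g f intg intf eq[symmetric]])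
  ultimately show ?thesis by eventually_elim auto
qed

lemma mono_eq_cont:
  fixes f g :: "real \<Rightarrow> real"
  assumes mono: "\<And>x y. x \<le> y \<Longrightarrow> f x \<le> f y" and cont: "continuous_on UNIV g"
    and eq: "\<And>q. q \<in> \<rat> \<Longrightarrow> f q = g q"
  shows "f s = g s"
proof (rule ccontr)
  assume ne: "f s \<noteq> g s"
  define e where "e = \<bar>f s - g s\<bar>"
  have e: "e > 0" using ne by (simp add: e_def)
  from cont have "isCont g s" by (simp add: continuous_on_eq_continuous_at)
  then obtain \<delta> where \<delta>: "\<delta> > 0" "\<And>y. \<bar>y - s\<bar> < \<delta> \<Longrightarrow> \<bar>g y - g s\<bar> < e"
    using e unfolding continuous_at_eps_delta dist_real_def by metis
  show False
  proof (cases "f s > g s")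
    case True
    obtain q where q: "q \<in> \<rat>" "s < q" "q < s + \<delta>" using Rats_dense_in_real[of s "s + \<delta>"] \<delta> by auto
    have "f s \<le> f q" using mono q by simp
    also have "\<dots> = g q" using eq q by simp
    also have "\<dots> < g s + e" using \<delta>(2)[of q] q by auto
    finally show False using True by (simp add: e_def)
  next
    case False
    then have lt: "f s < g s" using ne by simp
    obtain q where q: "q \<in> \<rat>" "s - \<delta> < q" "q < s" using Rats_dense_in_real[of "s - \<delta>" s] \<delta> by auto
    have "g s - e < g q" using \<delta>(2)[of q] q by auto
    also have "\<dots> = f q" using eq q by simp
    also have "\<dots> \<le> f s" using mono q by simp
    finally show False using lt by (simp add: e_def)
  qed
qed

lemma indep_copula: assumes fin: "finite S"
  shows "is_copula S (\<lambda>v. \<Prod>j\<in>S. v j)"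
proof -
  define U where "U = uniform_measure lborel {0..1::real}"
  have pU: "prob_space U" unfolding U_def by (intro prob_space_uniform_measure) auto
  have sU[measurable_cong]: "sets U = sets borel" by (simp add: U_def)
  have eU: "emeasure U {..s} = ennreal s" if "s \<in> {0..1}" for s
  proof -
    have "{0..1} \<inter> {..s} = {0..s}" using that by auto
    then show ?thesis using that by (simp add: U_def divide_ennreal_def)
  qed
  interpret P: product_prob_space "\<lambda>_::nat. U" S by (simp add: product_prob_spaceI pU)
  define P where "P = PiM S (\<lambda>_. U)"
  show ?thesis unfolding is_copula_def
  proof (intro exI[of _ P] conjI ballI allI impI)
    show "prob_space P" unfolding P_def by (rule prob_space_PiM) (rule pU)
    show sP: "sets P = sets (cube_space S)" unfolding P_def by (rule sets_PiM_cong) (auto simp: sU)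
    have spP: "space P = space (cube_space S)" unfolding P_def by (simp add: space_PiM U_def)
    fix j s assume j: "j \<in> S" and s: "s \<in> {0..1::real}"
    have "emeasure P {x \<in> space P. x j \<le> s} = emeasure P {x \<in> space P. x j \<in> {..s}}" by simp
    also have "\<dots> = emeasure U {..s}" unfolding P_def using j by (rule P.emeasure_PiM_Collect_single) (simp add: sU)
    finally show "measure P {x \<in> space P. x j \<le> s} = s" using eU[OF s] s by (simp add: measure_def)
  next
    fix u :: "nat \<Rightarrow> real" assume u: "\<forall>j\<in>S. u j \<in> {0..1}"
    have "{x \<in> space P. \<forall>j\<in>S. x j \<le> u j} = PiE S (\<lambda>j. {..u j})"
      by (rule set_eqI) (simp add: P_def U_def space_PiM PiE_iff conj_commute)
    moreover have "emeasure P (PiE S (\<lambda>j. {..u j})) = (\<Prod>j\<in>S. emeasure U {..u j})"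
      unfolding P_def by (rule P.emeasure_PiM[OF fin]) (simp add: sU)
    moreover have "(\<Prod>j\<in>S. emeasure U {..u j}) = ennreal (\<Prod>j\<in>S. u j)"
      using u by (subst prod_ennreal[symmetric]) (auto simp: eU intro!: prod.cong)
    ultimately have "emeasure P {x \<in> space P. \<forall>j\<in>S. x j \<le> u j} = ennreal (\<Prod>j\<in>S. u j)"
      by (simp only:)
    moreover have "0 \<le> (\<Prod>j\<in>S. u j)" using u by (auto intro: prod_nonneg)
    ultimately show "(\<Prod>j\<in>S. u j) = measure P {x \<in> space P. \<forall>j\<in>S. x j \<le> u j}"
      by (simp add: measure_def)
  qed
qed



context emp begin

lemma Qcomp: assumes j: "j \<in> S"
  shows "emeasure (Q i S) {y \<in> space (cube_space S). y j \<le> s} = emeasure (M i j) {..s}"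
proof -
  interpret P: product_prob_space "M i" S by (rule pps)
  have "emeasure (Q i S) {y \<in> space (cube_space S). y j \<le> s} = emeasure (Q i S) {y \<in> space (Q i S). y j \<in> {..s}}"
    by simp
  also have "\<dots> = emeasure (M i j) {..s}" unfolding Q_def using j by (rule P.emeasure_PiM_Collect_single) simp
  finally show ?thesis .
qed

definition cdfM where "cdfM i j s = real n * max 0 (min (real (kk j i) / real n) s - (real (kk j i) - 1) / real n)"

lemma emeasure_M_le: "emeasure (M i j) {..s} = ennreal (cdfM i j s)"
proof -
  let ?a = "(real (kk j i) - 1) / real n" and ?b = "real (kk j i) / real n"
  have ab: "?a < ?b" using npos by (simp add: divide_strict_right_mono)
  show ?thesis
  proof (cases "s \<le> ?a")
    case True
    then have "Iv i j \<inter> {..s} = {}" by (auto simp: Iv_def)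
    moreover have "cdfM i j s = 0" using True by (simp add: cdfM_def)
    ultimately show ?thesis by (simp add: emeasure_M)
  next
    case False
    then have "Iv i j \<inter> {..s} = {?a<..min ?b s}" by (auto simp: Iv_def)
    moreover have "?a \<le> min ?b s" using False ab by simp
    moreover have "cdfM i j s = real n * (min ?b s - ?a)" using False ab by (simp add: cdfM_def)
    ultimately show ?thesis by (simp add: emeasure_M ennreal_mult)
  qed
qed

lemma measure_M_le: "measure (M i j) {..s} = cdfM i j s"
  using emeasure_M_le[of i j s] unfolding measure_def by (simp add: cdfM_def)

lemma cont_cdfM: "continuous_on UNIV (cdfM i j)"
  unfolding cdfM_def by (intro continuous_intros)

lemma M_Icc: assumes "i \<in> {1..n}" "j \<in> {1..d}"
  shows "emeasure (M i j) {0..s} = emeasure (M i j) {..s}"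
proof -
  have "real (kk j i) \<ge> 1" using kk_range[OF assms(2,1)] by simp
  then have "0 \<le> (real (kk j i) - 1) / real n" using npos by simp
  then have "Iv i j \<inter> {0..s} = Iv i j \<inter> {..s}" unfolding Iv_def by auto
  then show ?thesis by (simp add: emeasure_M)
qed

lemma cdfM_nonneg: "0 \<le> cdfM i j s"
  unfolding cdfM_def by simp

lemma measure_Q_le: assumes "j \<in> S"
  shows "measure (Q i S) {y \<in> space (cube_space S). y j \<le> s} = cdfM i j s"
  using Qcomp[OF assms, of i s] emeasure_M_le[of i j s] cdfM_nonneg[of i j s]
  unfolding measure_def by simp

lemma emeasure_Q_box: assumes "finite S" "\<And>j. j \<in> S \<Longrightarrow> A j \<in> sets borel"
  shows "emeasure (Q i S) (PiE S A) = (\<Prod>j\<in>S. emeasure (M i j) (A j))"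
proof -
  interpret P: product_sigma_finite "M i" using pps[of i] by (simp add: product_prob_space_def)
  show ?thesis unfolding Q_def using assms by (intro P.emeasure_PiM) auto
qed

lemma restrict_merge1: "a \<in> extensional L \<Longrightarrow> restrict (merge L K (a, b)) L = a"
  by (auto simp: merge_def restrict_def extensional_def fun_eq_iff)

lemma restrict_merge2: "b \<in> extensional K \<Longrightarrow> L \<inter> K = {} \<Longrightarrow> restrict (merge L K (a, b)) K = b"
  by (auto simp: merge_def restrict_def extensional_def fun_eq_iff)

lemma indep_Q:
  assumes LJ: "L \<subseteq> J" and fin: "finite J"
    and A: "A \<in> sets (cube_space L)" and B: "B \<in> sets (cube_space (J - L))"
  shows "emeasure (Q i J) {x \<in> space (cube_space J). restrict x L \<in> A \<and> restrict x (J - L) \<in> B}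
       = emeasure (Q i L) A * emeasure (Q i (J - L)) B"
proof -
  interpret P: product_sigma_finite "M i" using pps[of i] by (simp add: product_prob_space_def)
  interpret Pj: prob_space "Q i (J - L)" by (rule prob_Q)
  have JJ: "L \<union> (J - L) = J" using LJ by auto
  have finL: "finite L" using LJ fin by (rule finite_subset)
  have D: "distr (PiM L (M i) \<Otimes>\<^sub>M PiM (J - L) (M i)) (PiM J (M i)) (merge L (J - L)) = PiM J (M i)"
    using P.distr_merge[of L "J - L"] JJ finL fin by simp
  have mm: "merge L (J - L) \<in> measurable (PiM L (M i) \<Otimes>\<^sub>M PiM (J - L) (M i)) (PiM J (M i))"
    using measurable_merge[of L "J - L" "M i"] JJ by simp
  define S where "S = {x \<in> space (cube_space J). restrict x L \<in> A \<and> restrict x (J - L) \<in> B}"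
  have r1: "(\<lambda>x. restrict x L) \<in> measurable (cube_space J) (cube_space L)"
    using LJ by (rule measurable_restrict_subset)
  have r2: "(\<lambda>x. restrict x (J - L)) \<in> measurable (cube_space J) (cube_space (J - L))"
    by (rule measurable_restrict_subset) auto
  have "S = ((\<lambda>x. restrict x L) -` A \<inter> space (cube_space J)) \<inter> ((\<lambda>x. restrict x (J - L)) -` B \<inter> space (cube_space J))"
    unfolding S_def by auto
  then have S: "S \<in> sets (PiM J (M i))"
    using measurable_sets[OF r1 A] measurable_sets[OF r2 B] sets_Q[of i J] unfolding Q_def by auto
  have Asp: "A \<subseteq> space (PiM L (M i))" using sets.sets_into_space[OF A] by (simp add: space_PiM)
  have Bsp: "B \<subseteq> space (PiM (J - L) (M i))" using sets.sets_into_space[OF B] by (simp add: space_PiM)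
  have pre: "merge L (J - L) -` S \<inter> space (PiM L (M i) \<Otimes>\<^sub>M PiM (J - L) (M i)) = A \<times> B"
  proof (intro set_eqI iffI)
    fix z assume z: "z \<in> merge L (J - L) -` S \<inter> space (PiM L (M i) \<Otimes>\<^sub>M PiM (J - L) (M i))"
    obtain a b where zab: "z = (a, b)" by (cases z)
    have a: "a \<in> extensional L" and b: "b \<in> extensional (J - L)"
      using z zab by (auto simp: space_pair_measure space_PiM PiE_def)
    show "z \<in> A \<times> B" using z zab restrict_merge1[OF a, of "J - L" b] restrict_merge2[OF b, of L a]
      by (auto simp: S_def)
  next
    fix z assume z: "z \<in> A \<times> B"
    obtain a b where zab: "z = (a, b)" by (cases z)
    have aA: "a \<in> A" and bB: "b \<in> B" using z zab by auto
    have asp: "a \<in> space (PiM L (M i))" and bsp: "b \<in> space (PiM (J - L) (M i))" using aA bB Asp Bsp by auto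
    have a: "a \<in> extensional L" and b: "b \<in> extensional (J - L)"
      using asp bsp by (auto simp: space_PiM PiE_def)
    have zsp: "z \<in> space (PiM L (M i) \<Otimes>\<^sub>M PiM (J - L) (M i))" using asp bsp zab by (simp add: space_pair_measure)
    have "merge L (J - L) z \<in> space (PiM J (M i))" using measurable_space[OF mm zsp] .
    then have "merge L (J - L) z \<in> space (cube_space J)" by (simp add: space_PiM)
    then show "z \<in> merge L (J - L) -` S \<inter> space (PiM L (M i) \<Otimes>\<^sub>M PiM (J - L) (M i))"
      using zsp zab aA bB restrict_merge1[OF a, of "J - L" b] restrict_merge2[OF b, of L a]
      by (auto simp: S_def)
  qed
  have "emeasure (Q i J) S = emeasure (distr (PiM L (M i) \<Otimes>\<^sub>M PiM (J - L) (M i)) (PiM J (M i)) (merge L (J - L))) S"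
    unfolding Q_def D ..
  also have "\<dots> = emeasure (PiM L (M i) \<Otimes>\<^sub>M PiM (J - L) (M i)) (A \<times> B)"
    using emeasure_distr[OF mm S] pre by simp
  also have "\<dots> = emeasure (Q i L) A * emeasure (Q i (J - L)) B"
    using Pj.emeasure_pair_measure_Times[of A "PiM L (M i)" B] A B sets_Q unfolding Q_def by simp
  finally show ?thesis unfolding S_def .
qed

end


context emp begin

lemma main: "universally_simplified d (emp_copula_measure d n \<sigma>)"
  unfolding universally_simplified_def
proof (intro allI impI)
  fix J L assume H: "J \<subseteq> {1..d} \<and> 2 \<le> card J \<and> L \<subseteq> J \<and> 1 \<le> card L \<and> card L + 2 \<le> card J"
  then have Jd: "J \<subseteq> {1..d}" and LJ: "L \<subseteq> J" and cL: "1 \<le> card L" by auto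
  have finJ: "finite J" using Jd finite_subset by blast
  have Ld: "L \<subseteq> {1..d}" using LJ Jd by auto
  have finL: "finite L" using finJ LJ finite_subset by blast
  have finJL: "finite (J - L)" using finJ by simp
  obtain l0 where l0: "l0 \<in> L" using cL by (cases "L = {}") auto
  let ?mu = "emp_copula_measure d n \<sigma>"
  let ?N = "marg ?mu L"
  interpret N: prob_space ?N by (rule prob_marg[OF Ld])
  define K0 where "K0 t = Q (idx l0 t) (J - L)" for t
  have K0m[measurable]: "K0 \<in> measurable (cube_space L) (subprob_algebra (cube_space (J - L)))"
    unfolding K0_def by (rule K0_meas[OF l0])
  have K0_AE: "AE t in Q i L. K0 t = Q i (J - L)" if i: "i \<in> {1..n}" for i
    using AE_idx[OF l0 Ld i] by eventually_elim (simp add: K0_def)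
  have Ssets: "{x \<in> space (cube_space J). restrict x L \<in> A \<and> restrict x (J - L) \<in> B} \<in> sets (cube_space J)"
    if A: "A \<in> sets (cube_space L)" and B: "B \<in> sets (cube_space (J - L))" for A B
  proof -
    have r1: "(\<lambda>x. restrict x L) \<in> measurable (cube_space J) (cube_space L)"
      using LJ by (rule measurable_restrict_subset)
    have r2: "(\<lambda>x. restrict x (J - L)) \<in> measurable (cube_space J) (cube_space (J - L))"
      by (rule measurable_restrict_subset) auto
    have "{x \<in> space (cube_space J). restrict x L \<in> A \<and> restrict x (J - L) \<in> B}
       = ((\<lambda>x. restrict x L) -` A \<inter> space (cube_space J)) \<inter> ((\<lambda>x. restrict x (J - L)) -` B \<inter> space (cube_space J))"
      by auto
    then show ?thesis using measurable_sets[OF r1 A] measurable_sets[OF r2 B] by auto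
  qed
  have rcd0: "is_rcd ?mu J L K0"
    unfolding is_rcd_def
  proof (intro conjI ballI)
    show "K0 \<in> measurable (cube_space L) (subprob_algebra (cube_space (J - L)))" by (rule K0m)
  next
    fix t show "prob_space (K0 t)" by (simp add: K0_def prob_Q)
  next
    fix A B assume A[measurable]: "A \<in> sets (cube_space L)" and B[measurable]: "B \<in> sets (cube_space (J - L))"
    let ?S = "{x \<in> space (cube_space J). restrict x L \<in> A \<and> restrict x (J - L) \<in> B}"
    have "emeasure (marg ?mu J) ?S = (\<Sum>i\<in>{1..n}. ennreal (1 / real n) * (emeasure (Q i L) A * emeasure (Q i (J - L)) B))"
      using margE[OF Jd Ssets[OF A B]] indep_Q[OF LJ finJ A B] by simp
    then have lhs: "measure (marg ?mu J) ?S = enn2real (\<Sum>i\<in>{1..n}. ennreal (1 / real n) * (emeasure (Q i L) A * emeasure (Q i (J - L)) B))"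
      by (simp add: measure_def)
    have fm: "(\<lambda>t. indicator A t * measure (K0 t) B) \<in> borel_measurable (cube_space L)"
      by measurable
    have "(\<integral>t. indicator A t * measure (K0 t) B \<partial>?N) = enn2real (\<integral>\<^sup>+t. ennreal (indicator A t * measure (K0 t) B) \<partial>?N)"
      by (rule integral_eq_nn_integral) (auto simp: measurable_cong_sets[OF sets_marg refl] fm)
    also have "(\<integral>\<^sup>+t. ennreal (indicator A t * measure (K0 t) B) \<partial>?N)
        = (\<Sum>i\<in>{1..n}. ennreal (1 / real n) * (\<integral>\<^sup>+t. ennreal (indicator A t * measure (K0 t) B) \<partial>Q i L))"
      by (rule margN[OF Ld]) (use fm in measurable)
    also have "\<dots> = (\<Sum>i\<in>{1..n}. ennreal (1 / real n) * (emeasure (Q i L) A * emeasure (Q i (J - L)) B))"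
    proof (intro sum.cong refl arg_cong[where f="(*) (ennreal (1/real n))"])
      fix i assume i: "i \<in> {1..n}"
      interpret Pj: prob_space "Q i (J - L)" by (rule prob_Q)
      have "(\<integral>\<^sup>+t. ennreal (indicator A t * measure (K0 t) B) \<partial>Q i L)
          = (\<integral>\<^sup>+t. emeasure (Q i (J - L)) B * indicator A t \<partial>Q i L)"
        by (rule nn_integral_cong_AE)
          (use K0_AE[OF i] in \<open>eventually_elim, simp add: indicator_def Pj.emeasure_eq_measure\<close>)
      also have "\<dots> = emeasure (Q i (J - L)) B * emeasure (Q i L) A"
        by (rule nn_integral_cmult_indicator) (simp add: sets_Q)
      finally show "(\<integral>\<^sup>+t. ennreal (indicator A t * measure (K0 t) B) \<partial>Q i L) = emeasure (Q i L) A * emeasure (Q i (J - L)) B"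
        by (simp add: mult.commute)
    qed
    finally show "measure (marg ?mu J) ?S = (\<integral>t. indicator A t * measure (K0 t) B \<partial>?N)"
      using lhs by simp
  qed
  have U: "(\<exists>A. is_copula (J - L) A \<and>
             (\<forall>u. (\<forall>j\<in>J. u j \<in> {0..1}) \<longrightarrow>
                marg_copula ?mu J u =
                (\<integral>t. indicator {t \<in> space (cube_space L). \<forall>j\<in>L. 0 \<le> t j \<and> t j \<le> u j} t
                      * A (\<lambda>j\<in>J - L. cond_df K j (u j) t) \<partial>?N))) \<and>
          (AE t in ?N. \<forall>j\<in>J - L. continuous_on UNIV (\<lambda>s. cond_df K j s t))"
    if rK: "is_rcd ?mu J L K" for K
  proof -
    from rK have Km[measurable]: "K \<in> measurable (cube_space L) (subprob_algebra (cube_space (J - L)))"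
      and Kp: "\<And>t. t \<in> space (cube_space L) \<Longrightarrow> prob_space (K t)"
      and Keq: "\<And>A B. A \<in> sets (cube_space L) \<Longrightarrow> B \<in> sets (cube_space (J - L)) \<Longrightarrow>
        measure (marg ?mu J) {x \<in> space (cube_space J). restrict x L \<in> A \<and> restrict x (J - L) \<in> B}
        = (\<integral>t. indicator A t * measure (K t) B \<partial>?N)"
      unfolding is_rcd_def by auto
    from rcd0 have K0eq: "\<And>A B. A \<in> sets (cube_space L) \<Longrightarrow> B \<in> sets (cube_space (J - L)) \<Longrightarrow>
        measure (marg ?mu J) {x \<in> space (cube_space J). restrict x L \<in> A \<and> restrict x (J - L) \<in> B}
        = (\<integral>t. indicator A t * measure (K0 t) B \<partial>?N)"
      unfolding is_rcd_def by auto
    have sK: "space (K t) = space (cube_space (J - L))" if t: "t \<in> space (cube_space L)" for t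
    proof -
      have "K t \<in> space (subprob_algebra (cube_space (J - L)))" using measurable_space[OF Km t] .
      then have "sets (K t) = sets (cube_space (J - L))" by (simp add: space_subprob_algebra)
      then show ?thesis by (rule sets_eq_imp_space_eq)
    qed
    define Bs where "Bs j s = {y \<in> space (cube_space (J - L)). y j \<le> s}" for j s
    have Bs_sets: "Bs j s \<in> sets (cube_space (J - L))" if "j \<in> J - L" for j s
      unfolding Bs_def using that by measurable
    have uniq: "AE t in ?N. measure (K t) B = measure (K0 t) B" if B: "B \<in> sets (cube_space (J - L))" for B
    proof (rule ae_unique[where c=1])
      show "finite_measure ?N" by (rule finite_measureI) (simp add: N.emeasure_space_1)
      show "(\<lambda>t. measure (K t) B) \<in> borel_measurable ?N"
        unfolding measurable_cong_sets[OF sets_marg refl] using B by measurable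
      show "(\<lambda>t. measure (K0 t) B) \<in> borel_measurable ?N"
        unfolding measurable_cong_sets[OF sets_marg refl] using B by measurable
      show "AE t in ?N. norm (measure (K t) B) \<le> 1"
      proof (rule AE_I2)
        fix t assume "t \<in> space ?N"
        then interpret Kt: prob_space "K t" using Kp by simp
        show "norm (measure (K t) B) \<le> 1" by simp
      qed
      show "AE t in ?N. norm (measure (K0 t) B) \<le> 1"
      proof (rule AE_I2)
        fix t
        interpret Kt: prob_space "K0 t" by (simp add: K0_def prob_Q)
        show "norm (measure (K0 t) B) \<le> 1" by simp
      qed
      fix A assume "A \<in> sets ?N"
      then have A: "A \<in> sets (cube_space L)" by (simp add: sets_marg)
      show "(\<integral>t. indicator A t * measure (K t) B \<partial>?N) = (\<integral>t. indicator A t * measure (K0 t) B \<partial>?N)"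
        using Keq[OF A B] K0eq[OF A B] by simp
    qed simp
    have cdK: "cond_df K j s t = measure (K t) (Bs j s)" if "t \<in> space (cube_space L)" for j s t
      by (simp add: cond_df_def Bs_def sK[OF that])
    have cd0: "measure (K0 t) (Bs j s) = cdfM (idx l0 t) j s" if "j \<in> J - L" for j s t
      unfolding K0_def Bs_def by (rule measure_Q_le[OF that])
    have AEall: "AE t in ?N. \<forall>j\<in>J - L. \<forall>s. cond_df K j s t = cdfM (idx l0 t) j s"
    proof -
      have "AE t in ?N. \<forall>j\<in>J - L. \<forall>q\<in>\<rat>. measure (K t) (Bs j q) = measure (K0 t) (Bs j q)"
        by (intro AE_ball_countable' countable_finite[OF finJL] countable_rat uniq Bs_sets)
      with AE_space show ?thesis
      proof eventually_elim
        case (elim t)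
        then have t: "t \<in> space (cube_space L)" by simp
        interpret Kt: prob_space "K t" using Kp[OF t] .
        show ?case
        proof (intro ballI allI)
          fix j s assume j: "j \<in> J - L"
          show "cond_df K j s t = cdfM (idx l0 t) j s"
          proof (rule mono_eq_cont[where f="\<lambda>s. cond_df K j s t"])
            fix x y :: real assume "x \<le> y"
            then have "Bs j x \<subseteq> Bs j y" by (auto simp: Bs_def)
            moreover have "Bs j y \<in> sets (K t)"
              using Bs_sets[OF j] measurable_space[OF Km t] by (simp add: space_subprob_algebra)
            ultimately show "cond_df K j x t \<le> cond_df K j y t"
              by (simp add: cdK[OF t] Kt.finite_measure_mono)
          next
            show "continuous_on UNIV (cdfM (idx l0 t) j)" by (rule cont_cdfM)
          next
            fix q :: real assume "q \<in> \<rat>"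
            then show "cond_df K j q t = cdfM (idx l0 t) j q"
              using elim j by (simp add: cdK[OF t] cd0[OF j])
          qed
        qed
      qed
    qed
    have U2: "AE t in ?N. \<forall>j\<in>J - L. continuous_on UNIV (\<lambda>s. cond_df K j s t)"
      using AEall
    proof eventually_elim
      case (elim t)
      show ?case
      proof
        fix j assume j: "j \<in> J - L"
        have "(\<lambda>s. cond_df K j s t) = cdfM (idx l0 t) j" using elim j by auto
        then show "continuous_on UNIV (\<lambda>s. cond_df K j s t)" using cont_cdfM[of "idx l0 t" j] by metis
      qed
    qed
    have U1: "\<forall>u. (\<forall>j\<in>J. u j \<in> {0..1}) \<longrightarrow>
                marg_copula ?mu J u =
                (\<integral>t. indicator {t \<in> space (cube_space L). \<forall>j\<in>L. 0 \<le> t j \<and> t j \<le> u j} t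
                      * (\<lambda>v. \<Prod>j\<in>J - L. v j) (\<lambda>j\<in>J - L. cond_df K j (u j) t) \<partial>?N)"
    proof (intro allI impI)
      fix u :: "nat \<Rightarrow> real" assume u: "\<forall>j\<in>J. u j \<in> {0..1}"
      define Au where "Au = {t \<in> space (cube_space L). \<forall>j\<in>L. 0 \<le> t j \<and> t j \<le> u j}"
      define F where "F i = (\<Prod>j\<in>J - L. cdfM i j (u j))" for i
      have F0: "0 \<le> F i" for i unfolding F_def by (intro prod_nonneg) (simp add: cdfM_nonneg)
      have Au_eq: "Au = PiE L (\<lambda>j. {0..u j})"
        by (rule set_eqI) (auto simp: Au_def space_PiM PiE_iff)
      have Au_sets[measurable]: "Au \<in> sets (cube_space L)"
        unfolding Au_eq using finL by (intro sets_PiM_I_finite) auto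
      have box: "{x \<in> space (cube_space J). \<forall>j\<in>J. x j \<le> u j} = PiE J (\<lambda>j. {..u j})"
        by (rule set_eqI) (auto simp: space_PiM PiE_iff)
      have box_sets: "PiE J (\<lambda>j. {..u j}) \<in> sets (cube_space J)"
        using finJ by (intro sets_PiM_I_finite) auto
      have lhs: "marg_copula ?mu J u = enn2real (\<Sum>i\<in>{1..n}. ennreal (1 / real n) * (\<Prod>j\<in>J. emeasure (M i j) {..u j}))"
        unfolding marg_copula_def box measure_def
        using margE[OF Jd box_sets] emeasure_Q_box[OF finJ, of "\<lambda>j. {..u j}"] by simp
      have mK: "(\<lambda>t. indicator Au t * (\<Prod>j\<in>J - L. measure (K t) (Bs j (u j)))) \<in> borel_measurable (cube_space L)"
      proof -
        have "(\<lambda>t. measure (K t) (Bs j (u j))) \<in> borel_measurable (cube_space L)" if "j \<in> J - L" for j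
          using Bs_sets[OF that] by measurable
        then show ?thesis by measurable
      qed
      have hm: "(\<lambda>t. indicator Au t * (\<lambda>v. \<Prod>j\<in>J - L. v j) (\<lambda>j\<in>J - L. cond_df K j (u j) t)) \<in> borel_measurable ?N"
        unfolding measurable_cong_sets[OF sets_marg refl]
        by (rule measurable_cong[THEN iffD2, OF _ mK]) (simp add: cdK)
      have Fi[measurable]: "(\<lambda>t. F (idx l0 t)) \<in> borel_measurable (cube_space L)"
        using measurable_compose[OF idx_meas[OF l0], of F borel] by simp
      have h0m: "(\<lambda>t. indicator Au t * F (idx l0 t)) \<in> borel_measurable (cube_space L)"
        by measurable
      have h_eq: "AE t in ?N. indicator Au t * (\<lambda>v. \<Prod>j\<in>J - L. v j) (\<lambda>j\<in>J - L. cond_df K j (u j) t) = indicator Au t * F (idx l0 t)"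
        using AEall by eventually_elim (auto simp: F_def intro!: prod.cong)
      have "(\<integral>t. indicator Au t * (\<lambda>v. \<Prod>j\<in>J - L. v j) (\<lambda>j\<in>J - L. cond_df K j (u j) t) \<partial>?N)
          = (\<integral>t. indicator Au t * F (idx l0 t) \<partial>?N)"
        by (rule integral_cong_AE[OF hm _ h_eq]) (simp add: measurable_cong_sets[OF sets_marg refl] h0m)
      also have "\<dots> = enn2real (\<integral>\<^sup>+t. ennreal (indicator Au t * F (idx l0 t)) \<partial>?N)"
        by (rule integral_eq_nn_integral) (auto simp: measurable_cong_sets[OF sets_marg refl] h0m F0)
      also have "(\<integral>\<^sup>+t. ennreal (indicator Au t * F (idx l0 t)) \<partial>?N)
          = (\<Sum>i\<in>{1..n}. ennreal (1 / real n) * (\<integral>\<^sup>+t. ennreal (indicator Au t * F (idx l0 t)) \<partial>Q i L))"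
        by (rule margN[OF Ld]) (use h0m in measurable)
      also have "\<dots> = (\<Sum>i\<in>{1..n}. ennreal (1 / real n) * (\<Prod>j\<in>J. emeasure (M i j) {..u j}))"
      proof (intro sum.cong refl arg_cong[where f="(*) (ennreal (1/real n))"])
        fix i assume i: "i \<in> {1..n}"
        have "(\<integral>\<^sup>+t. ennreal (indicator Au t * F (idx l0 t)) \<partial>Q i L) = (\<integral>\<^sup>+t. ennreal (F i) * indicator Au t \<partial>Q i L)"
          by (rule nn_integral_cong_AE)
            (use AE_idx[OF l0 Ld i] in \<open>eventually_elim, simp add: indicator_def\<close>)
        also have "\<dots> = ennreal (F i) * emeasure (Q i L) Au"
          by (rule nn_integral_cmult_indicator) (simp add: sets_Q)
        also have "emeasure (Q i L) Au = (\<Prod>j\<in>L. emeasure (M i j) {..u j})"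
        proof -
          have "emeasure (Q i L) Au = (\<Prod>j\<in>L. emeasure (M i j) {0..u j})"
            unfolding Au_eq by (rule emeasure_Q_box[OF finL]) simp
          also have "\<dots> = (\<Prod>j\<in>L. emeasure (M i j) {..u j})"
            using Ld i by (intro prod.cong refl M_Icc) auto
          finally show ?thesis .
        qed
        also have "ennreal (F i) = (\<Prod>j\<in>J - L. emeasure (M i j) {..u j})"
          unfolding F_def emeasure_M_le by (rule prod_ennreal[symmetric]) (simp add: cdfM_nonneg)
        also have "(\<Prod>j\<in>J - L. emeasure (M i j) {..u j}) * (\<Prod>j\<in>L. emeasure (M i j) {..u j})
            = (\<Prod>j\<in>(J - L) \<union> L. emeasure (M i j) {..u j})"
          by (rule prod.union_disjoint[symmetric]) (use finJL finL in auto)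
        also have "(J - L) \<union> L = J" using LJ by auto
        finally show "(\<integral>\<^sup>+t. ennreal (indicator Au t * F (idx l0 t)) \<partial>Q i L) = (\<Prod>j\<in>J. emeasure (M i j) {..u j})" .
      qed
      finally show "marg_copula ?mu J u =
                (\<integral>t. indicator {t \<in> space (cube_space L). \<forall>j\<in>L. 0 \<le> t j \<and> t j \<le> u j} t
                      * (\<lambda>v. \<Prod>j\<in>J - L. v j) (\<lambda>j\<in>J - L. cond_df K j (u j) t) \<partial>?N)"
        unfolding Au_def[symmetric] using lhs by simp
    qed
    show ?thesis using U1 U2 indep_copula[OF finJL] by blast
  qed
  show "(\<exists>K. is_rcd ?mu J L K) \<and> (\<forall>K. is_rcd ?mu J L K \<longrightarrow>
          (\<exists>A. is_copula (J - L) A \<and>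
             (\<forall>u. (\<forall>j\<in>J. u j \<in> {0..1}) \<longrightarrow>
                marg_copula ?mu J u =
                (\<integral>t. indicator {t \<in> space (cube_space L). \<forall>j\<in>L. 0 \<le> t j \<and> t j \<le> u j} t
                      * A (\<lambda>j\<in>J - L. cond_df K j (u j) t) \<partial>?N))) \<and>
          (AE t in ?N. \<forall>j\<in>J - L. continuous_on UNIV (\<lambda>s. cond_df K j s t)))"
    using rcd0 U by blast
qed

end

theorem theorem7p1:
  fixes d n :: nat and \<sigma> :: "nat \<Rightarrow> nat \<Rightarrow> nat"
  assumes "d \<ge> 3" and "n \<ge> 1" and "\<forall>j\<in>{1..d-1}. \<sigma> j permutes {1..n}"
  shows "universally_simplified d (emp_copula_measure d n \<sigma>)"
proof -
  interpret E: emp d n \<sigma> using assms by unfold_locales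
  show ?thesis by (rule E.main)
qed

end
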